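(* For every $n \in \mathbb{N}$, let $\lambda_n$ be the smallest positive integer such that $\lambda_n P^{(k)} \in E_n$ for every $P \in E_n$ and every $k \in \mathbb{N}$. Then $$\lambda_n = q_n = \prod_{p \text{ prime}} p^{\lfloor n/p \rfloor}.$$
   Context: For $n \in \mathbb{N}$, $E_n$ denotes the set of polynomials $P \in \mathbb{C}[X]$ of degree $\leq n$ (including the zero polynomial) such that $P(\mathbb{Z}) \subset \mathbb{Z}$; $P^{(k)}$ denotes the $k$-th derivative ($P^{(0)} = P$). For $n \in \mathbb{N}$, $$q_n = \mathrm{lcm}\bigl(\{1\}\cup\{i_1 i_2 \cdots i_k : k \in \mathbb{N}^*,\ i_1,\dots,i_k \in \mathbb{N}^*,\ i_1+\dots+i_k \leq n\}\bigr),$$ where $\mathbb{N}^*$ denotes the positive integers. $\lfloor\cdot\rfloor$ is the integer-part function. *)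

theory Defs
  imports "HOL-Computational_Algebra.Computational_Algebra"
begin

text \<open>E_n: complex polynomials of degree at most n mapping the integers into the integers
  (the zero polynomial is included, its degree being 0).\<close>
definition E :: "nat \<Rightarrow> complex poly set" where
  "E n = {P. degree P \<le> n \<and> (\<forall>z::int. poly P (of_int z) \<in> \<int>)}"

definition admissible :: "nat \<Rightarrow> nat \<Rightarrow> bool" where
  "admissible n l \<longleftrightarrow> (\<forall>P \<in> E n. \<forall>k::nat. smult (of_nat l) ((pderiv ^^ k) P) \<in> E n)"

definition lambda :: "nat \<Rightarrow> nat" where
  "lambda n = (LEAST l. 0 < l \<and> admissible n l)"

definition q :: "nat \<Rightarrow> nat" where
  "q n = Lcm ({1} \<union> {prod_list xs | xs. xs \<noteq> [] \<and> (\<forall>i\<in>set xs. 0 < i) \<and> sum_list xs \<le> n})"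

end

theory Submission imports Defs begin

definition Dl :: "complex poly \<Rightarrow> complex poly" where
  "Dl A = pcompose A [:1,1:] - A"
lemma poly_Dl: "poly (Dl A) x = poly A (x+1) - poly A x"
  by (simp add: Dl_def poly_pcompose add.commute)

lemma Dl_0 [simp]: "Dl 0 = 0"
  by (simp add: Dl_def)

lemma pderiv_Dl: "pderiv (Dl A) = Dl (pderiv A)"
  by (simp add: Dl_def pderiv_diff pderiv_pcompose pderiv_pCons)

lemma pderiv_Dl_pow: "pderiv ((Dl^^i) A) = (Dl^^i) (pderiv A)"
  by (induction i) (simp_all add: pderiv_Dl)

lemma degree_Dl: "degree (Dl A) \<le> degree A - 1"
proof (cases "degree A = 0")
  case True
  then obtain a where "A = [:a:]" by (metis degree_eq_zeroE)
  then show ?thesis by (simp add: Dl_def)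
next
  case False
  let ?d = "degree A"
  have dc: "degree (pcompose A [:1,1:]) = ?d" by (simp add: degree_pcompose)
  have lc: "coeff (pcompose A [:1,1:]) ?d = lead_coeff A"
    using lead_coeff_comp[of "[:1::complex,1:]" A] dc by simp
  have "degree (Dl A) \<le> ?d" unfolding Dl_def using dc
    by (metis degree_diff_le order_refl)
  moreover have "coeff (Dl A) ?d = 0" by (simp add: Dl_def lc)
  ultimately have "\<forall>i>?d - 1. coeff (Dl A) i = 0"
  proof (intro allI impI)
    fix i assume "i > ?d - 1"
    then have "i = ?d \<or> i > ?d" using False by arith
    then show "coeff (Dl A) i = 0"
    proof
      assume "i > ?d"
      then show ?thesis using \<open>degree (Dl A) \<le> ?d\<close> by (intro coeff_eq_0) simp
    qed (use \<open>coeff (Dl A) ?d = 0\<close> in simp)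
  qed
  then show ?thesis by (intro degree_le) auto
qed

lemma degree_Dl_pow: "degree ((Dl^^i) A) \<le> degree A - i"
proof (induction i)
  case (Suc i)
  then show ?case using degree_Dl[of "(Dl^^i) A"] by simp
qed simp

lemma Dl_pow_zero: assumes "degree A < i" shows "(Dl^^i) A = 0"
proof -
  define r where "r = i - Suc (degree A)"
  have i: "i = r + Suc (degree A)" using assms unfolding r_def by arith
  have "degree ((Dl^^degree A) A) = 0" using degree_Dl_pow[of "degree A" A] by simp
  then obtain a where "(Dl^^degree A) A = [:a:]" by (metis degree_eq_zeroE)
  then have "(Dl^^Suc (degree A)) A = 0" by (simp add: Dl_def)
  moreover have "(Dl^^r) 0 = 0" by (induction r) simp_all
  ultimately show ?thesis unfolding i funpow_add by simp
qed

lemma Dl_int: assumes "\<forall>z::int. poly A (of_int z) \<in> \<int>" shows "\<forall>z::int. poly (Dl A) (of_int z) \<in> \<int>"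
proof
  fix z :: int
  show "poly (Dl A) (of_int z) \<in> \<int>" using assms[rule_format, of "z+1"] assms[rule_format, of z] by (simp add: poly_Dl)
qed

lemma Dl_pow_int: assumes "\<forall>z::int. poly A (of_int z) \<in> \<int>" shows "\<forall>z::int. poly ((Dl^^i) A) (of_int z) \<in> \<int>"
  using assms by (induction i) (simp_all add: Dl_int)

definition Fz :: "nat \<Rightarrow> int poly" where "Fz j = (\<Prod>i=0..<j. [:- int i, 1:])"
definition Fc :: "nat \<Rightarrow> complex poly" where "Fc j = (\<Prod>i=0..<j. [:- of_nat i, 1:])"
definition B :: "nat \<Rightarrow> complex poly" where "B j = smult (inverse (fact j)) (Fc j)"

lemma coeff_mult_of_int:
  assumes "\<forall>k. coeff A k = of_int (coeff A' k)" "\<forall>k. coeff C k = of_int (coeff C' k)"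
  shows "coeff (A * C) k = (of_int (coeff (A' * C') k) :: complex)"
  using assms by (simp add: coeff_mult)

lemma coeff_Fc: "coeff (Fc j) k = of_int (coeff (Fz j) k)"
proof (induction j arbitrary: k)
  case 0
  then show ?case by (simp add: Fc_def Fz_def coeff_1)
next
  case (Suc j)
  have h: "\<forall>k. coeff [:- of_nat j, 1:] k = (of_int (coeff [:- int j, 1:] k) :: complex)"
    by (simp add: coeff_pCons split: nat.split)
  show ?case unfolding Fc_def Fz_def prod.atLeast0_lessThan_Suc
    using coeff_mult_of_int[OF _ h] Suc unfolding Fc_def Fz_def by blast
qed

lemma poly_Fc: "poly (Fc j) x = (\<Prod>i=0..<j. x - of_nat i)"
  by (simp add: Fc_def poly_prod)

lemma poly_B: "poly (B j) x = x gchoose j"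
  by (simp add: B_def poly_Fc gbinomial_mult_fact'[symmetric] field_simps)

lemma B_nat: "poly (B j) (of_nat x) = of_nat (x choose j)"
  by (simp add: poly_B binomial_gbinomial)

lemma gchoose_int: "(of_int z gchoose j :: complex) \<in> \<int>"
proof (cases "z \<ge> 0")
  case True
  then have "(of_int z :: complex) = of_nat (nat z)" by simp
  then show ?thesis by (simp add: binomial_gbinomial[symmetric])
next
  case False
  have "(of_int z gchoose j :: complex) = (-1) ^ j * ((of_nat j - of_int z - 1) gchoose j)"
    by (rule gbinomial_negated_upper)
  also have "(of_nat j - of_int z - 1 :: complex) = of_nat (nat (int j - z - 1))"
    using False by simp
  finally show ?thesis by (simp add: binomial_gbinomial[symmetric])
qed

lemma B_int: "poly (B j) (of_int z) \<in> \<int>"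
  by (simp add: poly_B gchoose_int)

lemma degree_Fc: "degree (Fc j) \<le> j"
proof -
  have "degree (Fc j) \<le> sum (degree \<circ> (\<lambda>i. [:- (of_nat i::complex), 1:])) {0..<j}"
    unfolding Fc_def by (rule degree_prod_sum_le) simp
  then show ?thesis by simp
qed

lemma degree_B: "degree (B j) \<le> j"
  using degree_Fc[of j] by (simp add: B_def)

lemma poly_pderiv_0: "poly (pderiv P) 0 = coeff P 1"
  by (simp add: poly_0_coeff_0 coeff_pderiv)

lemma pderiv_pow_0: "poly ((pderiv^^k) P) 0 = fact k * coeff P k"
proof -
  have "coeff ((pderiv^^k) P) j = pochhammer (of_nat (Suc j)) k * coeff P (j + k)" for j
  proof (induction k arbitrary: j)
    case 0 then show ?case by simp
  next
    case (Suc k)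
    have "coeff ((pderiv^^Suc k) P) j = of_nat (Suc j) * coeff ((pderiv^^k) P) (Suc j)"
      by (simp add: coeff_pderiv)
    also have "\<dots> = of_nat (Suc j) * (pochhammer (of_nat (Suc (Suc j))) k * coeff P (Suc j + k))"
      using Suc by simp
    also have "\<dots> = pochhammer (of_nat (Suc j)) (Suc k) * coeff P (j + Suc k)"
      by (simp add: pochhammer_rec add_ac mult_ac)
    finally show ?case .
  qed
  from this[of 0] show ?thesis by (simp add: poly_0_coeff_0 pochhammer_fact)
qed

lemma B_deriv0: "poly (pderiv (B 0)) 0 = 0"
  by (simp add: B_def Fc_def)

lemma B_deriv: "of_nat j * poly (pderiv (B j)) 0 \<in> \<int>"
proof (cases j)
  case 0 then show ?thesis by simp
next
  case (Suc j')
  have "Fc j = [:0,1:] * (\<Prod>i=1..<j. [:- of_nat i, 1:])"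
    unfolding Fc_def Suc by (subst prod.atLeast_Suc_lessThan) auto
  then have "coeff (Fc j) 1 = poly (\<Prod>i=1..<j. [:- of_nat i, 1:]) 0"
    by (simp add: poly_0_coeff_0)
  also have "\<dots> = (\<Prod>i=1..<j. - (of_nat i :: complex))" by (simp add: poly_prod)
  also have "\<dots> = (-1) ^ j' * (\<Prod>i=1..<j. of_nat i)" by (simp add: prod_uminus Suc)
  also have "(\<Prod>i=1..<j. of_nat i :: complex) = fact j'"
    by (simp add: fact_prod Suc atLeastLessThanSuc_atLeastAtMost)
  finally have c: "coeff (Fc j) 1 = (-1) ^ j' * fact j'" .
  have "of_nat j * poly (pderiv (B j)) 0 = of_nat j * coeff (Fc j) 1 / fact j"
    by (simp add: poly_pderiv_0 B_def field_simps)
  also have "\<dots> = (-1) ^ j'" unfolding c by (simp add: Suc field_simps del: of_nat_Suc)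
  finally have "of_nat j * poly (pderiv (B j)) 0 = (-1) ^ j'" .
  then show ?thesis by simp
qed


definition df :: "(nat \<Rightarrow> complex) \<Rightarrow> nat \<Rightarrow> complex" where
  "df f = (\<lambda>y. f (Suc y) - f y)"

lemma newton_fun: "f x = (\<Sum>j\<le>x. of_nat (x choose j) * (df^^j) f 0)"
proof (induction x arbitrary: f)
  case 0 then show ?case by simp
next
  case (Suc x)
  define h where "h j = (df^^j) f 0" for j
  have hs: "(df^^j) (df f) 0 = h (Suc j)" for j
    by (simp add: h_def funpow_Suc_right del: funpow.simps)
  have "f (Suc x) = df f x + f x" by (simp add: df_def)
  also have "df f x = (\<Sum>j\<le>x. of_nat (x choose j) * h (Suc j))"
    using Suc[of "df f"] by (simp add: hs)
  also have "f x = (\<Sum>j\<le>x. of_nat (x choose j) * h j)"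
    using Suc[of f] by (simp add: h_def)
  also have "(\<Sum>j\<le>x. of_nat (x choose j) * h j) = h 0 + (\<Sum>j\<le>x. of_nat (x choose Suc j) * h (Suc j))"
  proof -
    have "(\<Sum>j\<le>Suc x. of_nat (x choose j) * h j) = h 0 + (\<Sum>j\<le>x. of_nat (x choose Suc j) * h (Suc j))"
      by (subst sum.atMost_Suc_shift) simp
    then show ?thesis by (simp add: binomial_eq_0)
  qed
  also have "(\<Sum>j\<le>x. of_nat (x choose j) * h (Suc j)) + (h 0 + (\<Sum>j\<le>x. of_nat (x choose Suc j) * h (Suc j)))
     = h 0 + (\<Sum>j\<le>x. of_nat (Suc x choose Suc j) * h (Suc j))"
    by (simp add: sum.distrib ring_distribs add_ac)
  also have "\<dots> = (\<Sum>j\<le>Suc x. of_nat (Suc x choose j) * h j)"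
    by (subst sum.atMost_Suc_shift) simp
  finally show ?case by (simp add: h_def)
qed

lemma Dl_step: "(\<lambda>y. poly (Dl D) (of_nat y)) = df (\<lambda>y. poly D (of_nat y))"
  by (rule ext) (simp add: df_def poly_Dl add.commute)

lemma Dl_pow_nat: "(\<lambda>y. poly ((Dl^^j) C) (of_nat y)) = (df^^j) (\<lambda>y. poly C (of_nat y))"
proof (induction j)
  case 0 then show ?case by simp
next
  case (Suc j)
  show ?case by (simp only: funpow.simps o_apply Dl_step Suc)
qed

lemma newton:
  assumes "degree C \<le> v"
  shows "C = (\<Sum>j\<le>v. smult (poly ((Dl^^j) C) 0) (B j))"
proof -
  define R where "R = (\<Sum>j\<le>v. smult (poly ((Dl^^j) C) 0) (B j))"
  define g where "g j = poly ((Dl^^j) C) 0" for j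
  have g0: "g j = 0" if "j > v" for j
    using Dl_pow_zero[of C j] assms that by (simp add: g_def)
  have eq: "poly C (of_nat x) = poly R (of_nat x)" for x
  proof -
    have dd: "(df^^j) (\<lambda>y. poly C (of_nat y)) 0 = g j" for j
      using fun_cong[OF Dl_pow_nat[of j C], of 0] by (simp add: g_def)
    have "poly C (of_nat x) = (\<Sum>j\<le>x. of_nat (x choose j) * g j)"
      using newton_fun[of "\<lambda>y. poly C (of_nat y)" x] by (simp add: dd)
    also have "\<dots> = (\<Sum>j\<le>max x v. of_nat (x choose j) * g j)"
      by (rule sum.mono_neutral_left) auto
    also have "\<dots> = (\<Sum>j\<le>v. of_nat (x choose j) * g j)"
      by (rule sum.mono_neutral_right) (auto simp: g0)
    also have "\<dots> = poly R (of_nat x)"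
      by (simp add: R_def poly_sum B_nat g_def mult.commute)
    finally show ?thesis .
  qed
  have "C - R = 0"
  proof (rule ccontr)
    assume "C - R \<noteq> 0"
    then have "finite {x. poly (C - R) x = 0}" by (rule poly_roots_finite)
    moreover have "range (of_nat :: nat \<Rightarrow> complex) \<subseteq> {x. poly (C - R) x = 0}"
      using eq by auto
    ultimately have "finite (range (of_nat :: nat \<Rightarrow> complex))" by (rule finite_subset[rotated])
    then show False using finite_imageD[of "of_nat :: nat \<Rightarrow> complex" UNIV] inj_of_nat by auto
  qed
  then show ?thesis unfolding R_def by simp
qed

definition Q :: "nat \<Rightarrow> nat" where "Q a = (\<Prod>p\<in>{p. prime p \<and> p \<le> a}. p ^ (a div p))"

lemma finite_primes_le: "finite {p::nat. prime p \<and> p \<le> a}" by simp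

lemma Q_pos: "Q a > 0"
  unfolding Q_def by (rule prod_pos) (auto simp: prime_gt_0_nat)

lemma mult_Q: assumes "prime p" shows "multiplicity p (Q a) = a div p"
proof -
  let ?S = "{p::nat. prime p \<and> p \<le> a}"
  have "multiplicity p (Q a) = (\<Sum>r\<in>?S. multiplicity p (r ^ (a div r)))"
    unfolding Q_def using assms
    by (intro prime_elem_multiplicity_prod_distrib) (auto simp: prime_gt_0_nat)
  also have "\<dots> = (\<Sum>r\<in>?S. if r = p then a div p else 0)"
    by (intro sum.cong refl) (auto simp: assms multiplicity_distinct_prime_power)
  also have "\<dots> = (if p \<in> ?S then a div p else 0)"
    by (simp add: sum.delta)
  also have "\<dots> = a div p" using assms by auto
  finally show ?thesis .
qed

lemma pk_le: assumes "(p::nat) \<ge> 2" shows "p * k \<le> p ^ k"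
proof (cases k)
  case 0 then show ?thesis by simp
next
  case (Suc k')
  have "k' < 2 ^ k'" by simp
  also have "(2::nat) ^ k' \<le> p ^ k'" using assms by (intro power_mono) auto
  finally have "Suc k' \<le> p ^ k'" by simp
  then have "p * Suc k' \<le> p * p ^ k'" by (rule mult_le_mono2)
  then show ?thesis using Suc by simp
qed

lemma mult_bound: assumes "prime p" "(x::nat) > 0" shows "p * multiplicity p x \<le> x"
proof -
  have "p ^ multiplicity p x dvd x" by (rule multiplicity_dvd)
  then have "p ^ multiplicity p x \<le> x" using assms by (intro dvd_imp_le) auto
  moreover have "p * multiplicity p x \<le> p ^ multiplicity p x"
    using prime_ge_2_nat[OF assms(1)] by (rule pk_le)
  ultimately show ?thesis by simp
qed

lemma mult_div_bound: assumes "prime p" "(x::nat) > 0" shows "multiplicity p x \<le> x div p"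
proof -
  have "p > 0" using assms prime_gt_0_nat by blast
  then show ?thesis using mult_bound[OF assms] by (simp add: less_eq_div_iff_mult_less_eq mult.commute)
qed

lemma div_add_le: assumes "(p::nat) > 0" shows "a div p + t div p \<le> (a + t) div p"
proof -
  have "(a div p + t div p) * p \<le> a + t"
    using add_le_mono[OF div_times_less_eq_dividend[of a p] div_times_less_eq_dividend[of t p]]
    by (simp add: distrib_right)
  then show ?thesis using assms by (simp add: less_eq_div_iff_mult_less_eq)
qed

lemma tQ_dvd: assumes "t > 0" shows "t * Q a dvd Q (a + t)"
proof (rule multiplicity_le_imp_dvd)
  show "t * Q a \<noteq> 0" using assms Q_pos[of a] by simp
next
  fix p :: nat assume p: "prime p"
  have "multiplicity p (t * Q a) = multiplicity p t + multiplicity p (Q a)"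
    using p assms Q_pos[of a] by (intro prime_elem_multiplicity_mult_distrib) auto
  also have "\<dots> \<le> t div p + a div p" using mult_div_bound[OF p assms] mult_Q[OF p] by simp
  also have "\<dots> \<le> (a + t) div p" using div_add_le[of p a t] p prime_gt_0_nat by simp
  finally show "multiplicity p (t * Q a) \<le> multiplicity p (Q (a + t))" using mult_Q[OF p] by simp
qed

lemma Q_mono: assumes "a \<le> b" shows "Q a dvd Q b"
proof (cases "a = b")
  case False
  then have "b - a > 0" using assms by simp
  from tQ_dvd[OF this, of a] have "(b - a) * Q a dvd Q b" using assms by simp
  then show ?thesis using dvd_mult_right by blast
qed simp

lemma Q_dvdI: assumes "(l::nat) > 0" "\<And>p. prime p \<Longrightarrow> p ^ (a div p) dvd l" shows "Q a dvd l"
proof (rule multiplicity_le_imp_dvd)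
  show "Q a \<noteq> 0" using Q_pos[of a] by simp
next
  fix p :: nat assume p: "prime p"
  have "a div p \<le> multiplicity p l"
    using assms p by (intro multiplicity_geI) auto
  then show "multiplicity p (Q a) \<le> multiplicity p l" using mult_Q[OF p] by simp
qed

lemma mult_prod_list: assumes "prime p" "\<forall>i\<in>set xs. (0::nat) < i"
  shows "p * multiplicity p (prod_list xs) \<le> sum_list xs"
  using assms(2)
proof (induction xs)
  case Nil then show ?case by simp
next
  case (Cons x xs)
  have pos: "prod_list xs > 0" using Cons.prems by (induction xs) auto
  have "multiplicity p (prod_list (x # xs)) = multiplicity p x + multiplicity p (prod_list xs)"
    using assms(1) Cons.prems pos by (simp add: prime_elem_multiplicity_mult_distrib)
  then show ?case using mult_bound[OF assms(1), of x] Cons by (simp add: distrib_left)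
qed

lemma q_eq_Q: "q a = Q a"
proof -
  let ?A = "{1} \<union> {prod_list xs | xs. xs \<noteq> [] \<and> (\<forall>i\<in>set xs. 0 < i) \<and> sum_list xs \<le> a}"
  have d1: "q a dvd Q a" unfolding q_def
  proof (rule Lcm_least)
    fix b assume "b \<in> ?A"
    then show "b dvd Q a"
    proof
      assume "b \<in> {1}" then show ?thesis by simp
    next
      assume "b \<in> {prod_list xs | xs. xs \<noteq> [] \<and> (\<forall>i\<in>set xs. 0 < i) \<and> sum_list xs \<le> a}"
      then obtain xs where b: "b = prod_list xs" and xs: "\<forall>i\<in>set xs. 0 < i" "sum_list xs \<le> a" by blast
      have bpos: "b > 0" unfolding b using xs(1) by (induction xs) auto
      show "b dvd Q a"
      proof (rule multiplicity_le_imp_dvd)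
        show "b \<noteq> 0" using bpos by simp
      next
        fix p :: nat assume p: "prime p"
        have "p * multiplicity p b \<le> a" using mult_prod_list[OF p xs(1)] xs(2) b by simp
        then have "multiplicity p b \<le> a div p" using p prime_gt_0_nat
          by (simp add: less_eq_div_iff_mult_less_eq mult.commute)
        then show "multiplicity p b \<le> multiplicity p (Q a)" using mult_Q[OF p] by simp
      qed
    qed
  qed
  then have qpos: "q a > 0" using Q_pos[of a] by (metis dvd_0_left_iff gr0I less_irrefl)
  have d2: "Q a dvd q a"
  proof (rule Q_dvdI[OF qpos])
    fix p :: nat assume p: "prime p"
    show "p ^ (a div p) dvd q a"
    proof (cases "a div p = 0")
      case False
      let ?xs = "replicate (a div p) p"
      have "(a div p) * p \<le> a" by (rule div_times_less_eq_dividend)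
      moreover have "sum_list ?xs = (a div p) * p" by (simp add: sum_list_replicate)
      ultimately have s1: "sum_list ?xs \<le> a" by simp
      have s2: "?xs \<noteq> []" using False by simp
      have s3: "\<forall>i\<in>set ?xs. 0 < i" using p prime_gt_0_nat by simp
      from s1 s2 s3 have "prod_list ?xs \<in> {prod_list xs | xs. xs \<noteq> [] \<and> (\<forall>i\<in>set xs. 0 < i) \<and> sum_list xs \<le> a}"
        by blast
      then have "prod_list ?xs \<in> ?A" by (rule UnI2)
      then have "prod_list ?xs dvd q a" unfolding q_def by (rule dvd_Lcm)
      then show ?thesis by simp
    qed simp
  qed
  show ?thesis using d1 d2 by (rule dvd_antisym)
qed

definition cgr :: "nat \<Rightarrow> int poly \<Rightarrow> int poly \<Rightarrow> bool" where
  "cgr p A C \<longleftrightarrow> (\<exists>W. A - C = smult (int p) W)"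

lemma cgr_mult: assumes "cgr p A C" "cgr p D G" shows "cgr p (A * D) (C * G)"
proof -
  obtain W1 where W1: "A - C = smult (int p) W1" using assms(1) cgr_def by blast
  obtain W2 where W2: "D - G = smult (int p) W2" using assms(2) cgr_def by blast
  have "A * D - C * G = A * (D - G) + (A - C) * G" by (simp add: algebra_simps)
  also have "\<dots> = smult (int p) (A * W2 + W1 * G)" by (simp add: W1 W2 smult_add_right)
  finally show ?thesis unfolding cgr_def by blast
qed

lemma cgr_prod: fixes k :: nat shows "(\<forall>i<k. cgr p (f i) (g i)) \<Longrightarrow> cgr p (\<Prod>i=0..<k. f i) (\<Prod>i=0..<k. g i)"
proof (induction k)
  case 0 then show ?case unfolding cgr_def by (intro exI[of _ 0]) simp
next
  case (Suc k)
  then show ?case by (simp add: cgr_mult)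
qed

lemma Fz_split: "Fz (a + b) = Fz a * (\<Prod>r=0..<b. [:- int (a + r), 1:])"
proof -
  have "Fz (a + b) = (\<Prod>i=0..<a. [:- int i, 1:]) * (\<Prod>i=a..<a+b. [:- int i, 1:])"
    unfolding Fz_def by (rule prod.atLeastLessThan_concat[symmetric]) auto
  also have "(\<Prod>i=a..<a+b. [:- int i, 1:]) = (\<Prod>r=0..<b. [:- int (r + a), 1:])"
    using prod.shift_bounds_nat_ivl[of "\<lambda>i. [:- int i, 1:]" 0 a b] by (simp add: add.commute)
  finally show ?thesis unfolding Fz_def by (simp add: add.commute)
qed

lemma Fz_cgr: "cgr p (Fz (p * m)) (Fz p ^ m)"
proof (induction m)
  case 0 then show ?case unfolding cgr_def by (intro exI[of _ 0]) (simp add: Fz_def)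
next
  case (Suc m)
  have f: "cgr p (\<Prod>r=0..<p. [:- int (p * m + r), 1:]) (Fz p)"
    unfolding Fz_def
  proof (rule cgr_prod, intro allI impI)
    fix r assume "r < p"
    have "[:- int (p * m + r), 1:] - [:- int r, 1:] = smult (int p) [:- int m:]" by simp
    then show "cgr p [:- int (p * m + r), 1:] [:- int r, 1:]" unfolding cgr_def by blast
  qed
  have e1: "Fz (p * Suc m) = Fz (p * m) * (\<Prod>r=0..<p. [:- int (p * m + r), 1:])"
    using Fz_split[of "p * m" p] by (simp add: add.commute)
  show ?case unfolding e1 power_Suc2 by (rule cgr_mult[OF Suc f])
qed

lemma coeff_Fz_not_dvd: assumes p: "prime p" shows "\<not> int p dvd coeff (Fz (p * m)) m"
proof
  assume d: "int p dvd coeff (Fz (p * m)) m"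
  obtain W where W: "Fz (p * m) - Fz p ^ m = smult (int p) W" using Fz_cgr[of p m] cgr_def by blast
  have "coeff (Fz (p * m)) m - coeff (Fz p ^ m) m = int p * coeff W m"
    using arg_cong[OF W, of "\<lambda>X. coeff X m"] by simp
  then have "coeff (Fz p ^ m) m = coeff (Fz (p * m)) m - int p * coeff W m" by linarith
  then have d2: "int p dvd coeff (Fz p ^ m) m" using d by (simp add: dvd_diff)
  define V where "V = (\<Prod>i=1..<p. [:- int i, 1:])"
  have "p > 0" using p prime_gt_0_nat by blast
  then have "Fz p = [:0,1:] * V" unfolding Fz_def V_def by (subst prod.atLeast_Suc_lessThan) auto
  also have "[:0,1:] = (monom 1 1 :: int poly)" by (simp add: monom_Suc monom_0)
  finally have "Fz p ^ m = monom 1 m * V ^ m" by (simp add: power_mult_distrib monom_power)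
  then have "coeff (Fz p ^ m) m = coeff V 0 ^ m" by (simp add: coeff_monom_mult coeff_0_power)
  also have "coeff V 0 = (\<Prod>i=1..<p. - int i)" by (simp add: V_def poly_0_coeff_0[symmetric] poly_prod)
  finally have d3: "int p dvd (\<Prod>i=1..<p. - int i) ^ m" using d2 by simp
  have pi: "prime (int p)" using p by simp
  have nd: "\<not> int p dvd (\<Prod>i=1..<p. - int i)"
  proof
    assume "int p dvd (\<Prod>i=1..<p. - int i)"
    then obtain i where i: "i \<in> {1..<p}" "int p dvd - int i" using prime_dvd_prod_iff[OF finite_atLeastLessThan pi, of "\<lambda>i. - int i"] by blast
    then have "p dvd i" by simp
    then show False using i(1) by (auto dest: dvd_imp_le)
  qed
  show False
  proof (cases "m = 0")
    case True
    then show False using d3 pi by (simp add: prime_int_iff)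
  next
    case False
    then show False using d3 nd pi prime_dvd_power_iff by blast
  qed
qed

lemma fact_shift: "fact (a + k) = (fact a :: nat) * (\<Prod>i<k. a + Suc i)"
  by (induction k) (simp_all add: algebra_simps)

lemma fact_decomp: assumes p: "prime p"
  shows "\<exists>R. fact (p * m) = p ^ m * fact m * R \<and> \<not> p dvd (R::nat)"
proof (induction m)
  case 0 then show ?case using p by (intro exI[of _ 1]) auto
next
  case (Suc m)
  then obtain R where R: "fact (p * m) = p ^ m * fact m * R" "\<not> p dvd R" by blast
  have p0: "p > 0" using p prime_gt_0_nat by blast
  define T where "T = (\<Prod>i<p - 1. p * m + Suc i)"
  obtain k where k: "p = Suc k" using p0 by (cases p) auto
  have "(\<Prod>i<p. p * m + Suc i) = T * (p * m + p)"
    unfolding T_def k by (simp only: prod.lessThan_Suc diff_Suc_1)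
  then have "fact (p * Suc m) = fact (p * m) * T * (p * Suc m)"
    using fact_shift[of "p * m" p] by (simp add: algebra_simps)
  also have "\<dots> = p ^ Suc m * fact (Suc m) * (R * T)" unfolding R(1) by (simp add: algebra_simps)
  finally have e: "fact (p * Suc m) = p ^ Suc m * fact (Suc m) * (R * T)" .
  have "\<not> p dvd T"
  proof
    assume "p dvd T"
    then obtain i where i: "i < p - 1" "p dvd p * m + Suc i"
      unfolding T_def using prime_dvd_prod_iff[OF finite_lessThan p, of "\<lambda>i. p * m + Suc i"] by blast
    then have "p dvd Suc i" using dvd_add_right_iff[of p "p*m" "Suc i"] dvd_triv_left[of p m] by blast
    then have "p \<le> Suc i" by (rule dvd_imp_le) simp
    then show False using i(1) by simp
  qed
  then have "\<not> p dvd R * T" using R(2) p by (simp add: prime_dvd_mult_iff)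
  then show ?case using e by blast
qed


lemma pderiv_sum: "pderiv (\<Sum>j\<in>A. f j) = (\<Sum>j\<in>A. pderiv (f j))"
  by (induction A rule: infinite_finite_induct) (simp_all add: pderiv_add)

definition good :: "nat \<Rightarrow> complex poly \<Rightarrow> bool" where
  "good w A \<longleftrightarrow> degree A \<le> w \<and> (\<forall>i. of_nat (Q (w - i)) * poly ((Dl^^i) A) 0 \<in> \<int>)"

lemma E_good: assumes "P \<in> E n" shows "good n P"
proof -
  have d: "degree P \<le> n" and iv: "\<forall>z::int. poly P (of_int z) \<in> \<int>" using assms by (auto simp: E_def)
  have "poly ((Dl^^i) P) 0 \<in> \<int>" for i
    using Dl_pow_int[OF iv, of i] by (metis of_int_0)
  then show ?thesis using d unfolding good_def by (auto intro: Ints_mult)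
qed

lemma good_pderiv: assumes g: "good w A" shows "good w (pderiv A)"
proof -
  have dA: "degree A \<le> w" using g by (simp add: good_def)
  have gi: "of_nat (Q (w - i)) * poly ((Dl^^i) A) 0 \<in> \<int>" for i using g by (simp add: good_def)
  have "degree (pderiv A) \<le> w" using dA by (simp add: degree_pderiv)
  moreover have "of_nat (Q (w - i)) * poly ((Dl^^i) (pderiv A)) 0 \<in> \<int>" for i
  proof -
    define C where "C = (Dl^^i) A"
    define g where "g j = poly ((Dl^^j) C) 0" for j
    define b where "b j = poly (pderiv (B j)) 0" for j
    have dC: "degree C \<le> w" using degree_Dl_pow[of i A] dA unfolding C_def by simp
    have eqC: "C = (\<Sum>j\<le>w. smult (g j) (B j))" unfolding g_def by (rule newton[OF dC])
    have "pderiv C = (\<Sum>j\<le>w. smult (g j) (pderiv (B j)))"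
      using arg_cong[OF eqC, of pderiv] by (simp add: pderiv_sum pderiv_smult)
    then have pc: "poly (pderiv C) 0 = (\<Sum>j\<le>w. g j * b j)"
      by (simp add: poly_sum b_def)
    have gj: "g j = poly ((Dl^^(j + i)) A) 0" for j unfolding g_def C_def by (simp add: funpow_add)
    have trm: "of_nat (Q (w - i)) * (g j * b j) \<in> \<int>" for j
    proof (cases "j = 0")
      case True then show ?thesis by (simp add: b_def B_deriv0)
    next
      case False
      show ?thesis
      proof (cases "j + i \<le> w")
        case False
        then have "(Dl^^(j + i)) A = 0" using dA by (intro Dl_pow_zero) simp
        then show ?thesis by (simp add: gj)
      next
        case True
        define a where "a = w - i - j"
        have wi: "w - i = a + j" using True unfolding a_def by simp
        have wji: "w - (j + i) = a" unfolding a_def by simp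
        obtain r where r: "Q (a + j) = j * Q a * r" using tQ_dvd[of j a] \<open>j \<noteq> 0\<close> by (auto elim: dvdE)
        have eq: "of_nat (Q (w - i)) * (g j * b j) = of_nat r * (of_nat (Q a) * g j) * (of_nat j * b j)"
          unfolding wi r by (simp add: algebra_simps)
        have "of_nat (Q a) * g j \<in> \<int>" using gi[of "j + i"] unfolding wji gj .
        moreover have "of_nat j * b j \<in> \<int>" unfolding b_def by (rule B_deriv)
        ultimately show ?thesis unfolding eq by (rule Ints_mult[OF Ints_mult[OF Ints_of_nat]])
      qed
    qed
    have "of_nat (Q (w - i)) * poly (pderiv C) 0 = (\<Sum>j\<le>w. of_nat (Q (w - i)) * (g j * b j))"
      unfolding pc by (simp add: sum_distrib_left)
    also have "\<dots> \<in> \<int>" using trm by (intro Ints_sum) auto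
    finally show ?thesis unfolding C_def by (simp add: pderiv_Dl_pow)
  qed
  ultimately show ?thesis unfolding good_def by blast
qed

lemma good_int: assumes g: "good w A" shows "of_nat (Q w) * poly A (of_int z) \<in> \<int>"
proof -
  have dA: "degree A \<le> w" using g by (simp add: good_def)
  have gi: "of_nat (Q (w - i)) * poly ((Dl^^i) A) 0 \<in> \<int>" for i using g by (simp add: good_def)
  define g where "g j = poly ((Dl^^j) A) 0" for j
  have eqA: "A = (\<Sum>j\<le>w. smult (g j) (B j))" unfolding g_def by (rule newton[OF dA])
  have "poly A (of_int z) = (\<Sum>j\<le>w. g j * poly (B j) (of_int z))"
    using arg_cong[OF eqA, of "\<lambda>X. poly X (of_int z)"] by (simp add: poly_sum)
  then have "of_nat (Q w) * poly A (of_int z) = (\<Sum>j\<le>w. of_nat (Q w) * (g j * poly (B j) (of_int z)))"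
    by (simp add: sum_distrib_left)
  also have "\<dots> \<in> \<int>"
  proof (intro Ints_sum)
    fix j assume "j \<in> {..w}"
    obtain r where r: "Q w = Q (w - j) * r" using Q_mono[of "w - j" w] by (auto elim: dvdE)
    have eq: "of_nat (Q w) * (g j * poly (B j) (of_int z)) = of_nat r * (of_nat (Q (w - j)) * g j) * poly (B j) (of_int z)"
      unfolding r by (simp add: algebra_simps)
    have h1: "of_nat (Q (w - j)) * g j \<in> \<int>" using gi[of j] unfolding g_def .
    show "of_nat (Q w) * (g j * poly (B j) (of_int z)) \<in> \<int>"
      unfolding eq using h1 B_int[of j z] by (rule Ints_mult[OF Ints_mult[OF Ints_of_nat]])
  qed
  finally show ?thesis .
qed

lemma admissible_Q: "admissible n (Q n)"
  unfolding admissible_def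
proof (intro ballI allI)
  fix P k assume P: "P \<in> E n"
  have "good n ((pderiv^^k) P)"
    by (induction k) (simp_all add: E_good[OF P] good_pderiv)
  then have d: "degree ((pderiv^^k) P) \<le> n" and i: "\<And>z. of_nat (Q n) * poly ((pderiv^^k) P) (of_int z) \<in> \<int>"
    by (auto simp: good_def intro: good_int)
  have "degree (smult (of_nat (Q n)) ((pderiv^^k) P)) \<le> n"
    using d degree_smult_le order_trans by blast
  then show "smult (of_nat (Q n)) ((pderiv^^k) P) \<in> E n"
    using i by (simp add: E_def)
qed

lemma lower: assumes p: "prime p" and adm: "admissible n l" shows "p ^ (n div p) dvd l"
proof -
  define m where "m = n div p"
  define N where "N = p * m"
  have Nn: "N \<le> n" unfolding N_def m_def using div_times_less_eq_dividend[of n p] by (simp add: mult.commute)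
  have BE: "B N \<in> E n" using degree_B[of N] Nn B_int[of N] by (auto simp: E_def)
  then have "smult (of_nat l) ((pderiv^^m) (B N)) \<in> E n" using adm by (simp add: admissible_def)
  then have "\<forall>z::int. poly (smult (of_nat l) ((pderiv^^m) (B N))) (of_int z) \<in> \<int>" by (simp add: E_def)
  then have "poly (smult (of_nat l) ((pderiv^^m) (B N))) (of_int 0) \<in> \<int>" by blast
  then have "of_nat l * (fact m * (inverse (fact N) * of_int (coeff (Fz N) m))) \<in> (\<int> :: complex set)"
    by (simp add: pderiv_pow_0 B_def coeff_Fc)
  then obtain z where z: "of_nat l * (fact m * (inverse (fact N) * of_int (coeff (Fz N) m))) = (of_int z :: complex)"
    by (elim Ints_cases) auto
  define c where "c = coeff (Fz N) m"
  have "(of_nat l * fact m * of_int c :: complex) = of_int z * fact N"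
    using z unfolding c_def by (simp add: field_simps)
  then have "(of_int (int l * fact m * c) :: complex) = of_int (z * fact N)" by simp
  then have e: "int l * fact m * c = z * fact N" by (simp only: of_int_eq_iff)
  obtain R where R: "fact N = p ^ m * fact m * R" "\<not> p dvd (R::nat)"
    using fact_decomp[OF p, of m] unfolding N_def by blast
  have "(fact N :: int) = int (fact N)" by simp
  also have "\<dots> = int p ^ m * fact m * int R" unfolding R(1) by simp
  finally have "int l * fact m * c = z * (int p ^ m * fact m * int R)" using e by simp
  then have "fact m * (int l * c) = fact m * (z * int p ^ m * int R)" by (simp add: algebra_simps)
  then have "int l * c = z * int p ^ m * int R" by simp
  then have d: "int p ^ m dvd int l * c" by (metis dvd_triv_left mult.assoc mult.commute)
  have pi: "prime (int p)" using p by simp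
  have "\<not> int p dvd c" unfolding c_def N_def by (rule coeff_Fz_not_dvd[OF p])
  then have "coprime (int p) c" by (rule prime_imp_coprime[OF pi])
  then have "coprime (int p ^ m) c" by simp
  then have "int p ^ m dvd int l" using d by (simp add: coprime_dvd_mult_left_iff)
  then have "int (p ^ m) dvd int l" by simp
  then show ?thesis unfolding m_def by (simp only: int_dvd_int_iff)
qed

theorem theorem4:
  fixes n :: nat
  shows "0 < q n \<and> admissible n (q n) \<and> (\<forall>l. 0 < l \<and> admissible n l \<longrightarrow> q n \<le> l)
         \<and> lambda n = q n
         \<and> q n = (\<Prod>p\<in>{p. prime p \<and> p \<le> n}. p ^ (n div p))"
proof -
  have qQ: "q n = Q n" by (rule q_eq_Q)
  have pos: "0 < Q n" by (rule Q_pos)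
  have adm: "admissible n (Q n)" by (rule admissible_Q)
  have min: "\<forall>l. 0 < l \<and> admissible n l \<longrightarrow> Q n \<le> l"
  proof (intro allI impI)
    fix l assume l: "0 < l \<and> admissible n l"
    then have "Q n dvd l" using lower by (intro Q_dvdI) auto
    then show "Q n \<le> l" using l by (intro dvd_imp_le) auto
  qed
  have lam: "lambda n = Q n" unfolding lambda_def
    by (rule Least_equality) (use pos adm min in auto)
  show ?thesis using qQ pos adm min lam by (simp add: Q_def)
qed

end
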